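(* Let $k/\mathbb{Q}$ be a finite extension and $\Lambda$ a finitely generated subgroup of $\mathrm{GL}(n;k)$, and let $\Gamma$ be a unipotent subgroup of $\Lambda$. Then there exists a torsion-free finite index subgroup $\Lambda_0$ of $\Lambda$ with $\Gamma\subseteq\Lambda_0$.
   Context: A subgroup is unipotent if it is conjugate in $\mathrm{GL}(n;\mathbb{C})$ into the group of upper triangular matrices with all diagonal entries equal to 1. *)

theory Defs
  imports "HOL-Analysis.Analysis" "HOL-Algebra.Algebra"
begin

definition GLC :: "(complex^'n^'n) monoid" where
  "GLC = \<lparr>carrier = {A. invertible A}, mult = (**), one = mat 1\<rparr>"

definition rat_span :: "complex set \<Rightarrow> complex set" where
  "rat_span B = {(\<Sum>b\<in>B. of_rat (c b) * b) | c. True}"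

text \<open>A number field, realised as a subfield of C (every finite extension of Q
  embeds in C) which is finite-dimensional as a Q-vector space.\<close>
definition number_field :: "complex set \<Rightarrow> bool" where
  "number_field K \<longleftrightarrow>
     0 \<in> K \<and> 1 \<in> K \<and>
     (\<forall>x\<in>K. \<forall>y\<in>K. x + y \<in> K \<and> x * y \<in> K \<and> - x \<in> K) \<and>
     (\<forall>x\<in>K. x \<noteq> 0 \<longrightarrow> inverse x \<in> K) \<and>
     (\<exists>B. finite B \<and> B \<subseteq> K \<and> K = rat_span B)"

definition entries_in :: "complex set \<Rightarrow> complex^'n^'n \<Rightarrow> bool" where
  "entries_in K A \<longleftrightarrow> (\<forall>i j. A $ i $ j \<in> K)"

definition upper_unitriangular :: "((complex, 'n::{finite,linorder}) vec, 'n) vec \<Rightarrow> bool" where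
  "upper_unitriangular A \<longleftrightarrow>
     (\<forall>i j. j < i \<longrightarrow> A $ i $ j = 0) \<and> (\<forall>i. A $ i $ i = 1)"

definition unipotent_subgroup :: "(((complex, 'n::{finite,linorder}) vec, 'n) vec) set \<Rightarrow> bool" where
  "unipotent_subgroup G \<longleftrightarrow> subgroup G GLC \<and>
     (\<exists>P::((complex, 'n) vec, 'n) vec. invertible P \<and> (\<forall>A\<in>G. upper_unitriangular (matrix_inv P ** A ** P)))"

definition torsion_free :: "(complex^'n^'n) set \<Rightarrow> bool" where
  "torsion_free H \<longleftrightarrow>
     (\<forall>g\<in>H. \<forall>m::nat. m > 0 \<longrightarrow> g [^]\<^bsub>GLC\<^esub> m = \<one>\<^bsub>GLC\<^esub> \<longrightarrow> g = \<one>\<^bsub>GLC\<^esub>)"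

end

theory Submission
  imports Defs "HOL-Number_Theory.Cong"
begin

typedef ('n::finite) sqm = "UNIV :: (complex^'n^'n) set" morphisms Rep_sqm Abs_sqm by auto

lemma matrix_add_rdistrib': "((A::complex^'n::finite^'n::finite) + B) ** C = A ** C + B ** C"
  by (simp add: matrix_matrix_mult_def vec_eq_iff distrib_right sum.distrib)

lemma matrix_neg_l': "(- (A::complex^'n::finite^'n::finite)) ** C = - (A ** C)"
  by (simp add: matrix_matrix_mult_def vec_eq_iff sum_negf)

lemma matrix_zero_l': "(0::complex^'n::finite^'n::finite) ** C = 0"
  by (simp add: matrix_matrix_mult_def vec_eq_iff)

lemma matrix_zero_r': "(C::complex^'n::finite^'n::finite) ** 0 = 0"
  by (simp add: matrix_matrix_mult_def vec_eq_iff)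

instantiation sqm :: (finite) ring_1
begin
definition zero_sqm_def: "0 = Abs_sqm 0"
definition one_sqm_def: "1 = Abs_sqm (mat 1)"
definition plus_sqm_def: "x + y = Abs_sqm (Rep_sqm x + Rep_sqm y)"
definition minus_sqm_def: "x - y = Abs_sqm (Rep_sqm x - Rep_sqm y)"
definition uminus_sqm_def: "- x = Abs_sqm (- Rep_sqm x)"
definition times_sqm_def: "x * y = Abs_sqm (Rep_sqm x ** Rep_sqm y)"
instance
proof
  fix a b c :: "'a sqm"
  show "a * b * c = a * (b * c)"
    by (simp add: times_sqm_def Abs_sqm_inverse matrix_mul_assoc)
  show "1 * a = a" by (simp add: times_sqm_def one_sqm_def Abs_sqm_inverse Rep_sqm_inverse)
  show "a * 1 = a" by (simp add: times_sqm_def one_sqm_def Abs_sqm_inverse Rep_sqm_inverse)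
  show "(a + b) * c = a * c + b * c"
    by (simp add: times_sqm_def plus_sqm_def Abs_sqm_inverse matrix_add_rdistrib')
  show "a * (b + c) = a * b + a * c"
    by (simp add: times_sqm_def plus_sqm_def Abs_sqm_inverse matrix_add_ldistrib)
  show "a + b + c = a + (b + c)"
    by (simp add: plus_sqm_def Abs_sqm_inverse add.assoc)
  show "a + b = b + a"
    by (simp add: plus_sqm_def add.commute)
  show "0 + a = a"
    by (simp add: plus_sqm_def zero_sqm_def Abs_sqm_inverse Rep_sqm_inverse)
  show "- a + a = 0"
    by (simp add: plus_sqm_def zero_sqm_def uminus_sqm_def Abs_sqm_inverse)
  show "a - b = a + - b"
    by (simp add: plus_sqm_def minus_sqm_def uminus_sqm_def Abs_sqm_inverse)
  show "(0::'a sqm) \<noteq> 1"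
  proof
    assume "(0::'a sqm) = 1"
    hence "(0::complex^'a^'a) = mat 1" by (simp add: zero_sqm_def one_sqm_def Abs_sqm_inject)
    hence "(mat 1::complex^'a^'a) $ undefined $ undefined = 0" by (metis zero_index)
    thus False by (simp add: mat_def)
  qed
qed
end

lemma Rep_sqm_simps:
  "Rep_sqm (x * y) = Rep_sqm x ** Rep_sqm y"
  "Rep_sqm (x + y) = Rep_sqm x + Rep_sqm y"
  "Rep_sqm (x - y) = Rep_sqm x - Rep_sqm y"
  "Rep_sqm (- x) = - Rep_sqm x"
  "Rep_sqm 0 = 0" "Rep_sqm 1 = mat 1"
  by (simp_all add: times_sqm_def plus_sqm_def minus_sqm_def uminus_sqm_def zero_sqm_def one_sqm_def Abs_sqm_inverse)

lemma Abs_sqm_simps: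
  "Abs_sqm (A ** B) = Abs_sqm A * Abs_sqm B"
  "Abs_sqm (A + B) = Abs_sqm A + Abs_sqm B"
  "Abs_sqm (A - B) = Abs_sqm A - Abs_sqm B"
  "Abs_sqm 0 = 0" "Abs_sqm (mat 1) = 1"
  by (simp_all add: times_sqm_def plus_sqm_def minus_sqm_def zero_sqm_def one_sqm_def Abs_sqm_inverse)

lemma Rep_sqm_of_nat: "Rep_sqm (of_nat c * x) $ i $ j = of_nat c * Rep_sqm x $ i $ j"
proof (induction c)
  case 0 then show ?case by (simp add: Rep_sqm_simps)
next
  case (Suc c) then show ?case by (simp add: Rep_sqm_simps distrib_right)
qed


lemma binomial_ring1:
  fixes x :: "'a::ring_1"
  shows "(1 + x) ^ m = (\<Sum>j\<le>m. of_nat (m choose j) * x ^ j)"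
proof (induction m)
  case 0 then show ?case by simp
next
  case (Suc m)
  let ?S = "\<Sum>j\<le>m. of_nat (m choose j) * x ^ j"
  have sh: "?S = 1 + (\<Sum>j\<le>m. of_nat (m choose Suc j) * x ^ Suc j)"
  proof -
    have "?S = 1 + (\<Sum>j<m. of_nat (m choose Suc j) * x ^ Suc j)"
      by (simp add: sum.atMost_shift)
    moreover have "(\<Sum>j\<le>m. of_nat (m choose Suc j) * x ^ Suc j) = (\<Sum>j<m. of_nat (m choose Suc j) * x ^ Suc j)"
      by (simp add: lessThan_Suc_atMost[symmetric] binomial_eq_0)
    ultimately show ?thesis by simp
  qed
  have "(1 + x) ^ Suc m = ?S * (1 + x)" using Suc by (simp add: power_Suc2 del: power_Suc)
  also have "\<dots> = ?S + (\<Sum>j\<le>m. of_nat (m choose j) * x ^ Suc j)"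
    by (simp add: distrib_left sum_distrib_right mult.assoc power_Suc2 power_commutes)
  also have "\<dots> = 1 + (\<Sum>j\<le>m. of_nat (m choose j) * x ^ Suc j) + (\<Sum>j\<le>m. of_nat (m choose Suc j) * x ^ Suc j)"
    using sh by (simp add: add_ac)
  also have "\<dots> = 1 + (\<Sum>j\<le>m. of_nat (Suc m choose Suc j) * x ^ Suc j)"
    by (simp add: sum.distrib[symmetric] distrib_right add_ac)
  also have "\<dots> = (\<Sum>j\<le>Suc m. of_nat (Suc m choose j) * x ^ j)"
    by (simp only: sum.atMost_Suc_shift) simp
  finally show ?case .
qed

locale pval =
  fixes D :: "nat \<Rightarrow> 'a::ring_1 \<Rightarrow> bool" and p :: nat
  assumes p_prime: "Factorial_Ring.prime p"
    and p2: "p > 2"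
    and D_zero: "D k 0"
    and D_add: "D k x \<Longrightarrow> D k y \<Longrightarrow> D k (x + y)"
    and D_neg: "D k x \<Longrightarrow> D k (- x)"
    and D_mult: "D k x \<Longrightarrow> D l y \<Longrightarrow> D (k + l) (x * y)"
    and D_one: "D 0 1"
    and D_mono: "D k x \<Longrightarrow> l \<le> k \<Longrightarrow> D l x"
    and D_pmul: "D k x \<Longrightarrow> D (k + j) (of_nat (p ^ j) * x)"
    and D_pcancel: "D (k + j) (of_nat (p ^ j) * x) \<Longrightarrow> D k x"
    and D_div: "D k x \<Longrightarrow> \<exists>y. x = of_nat (p ^ k) * y \<and> D 0 y"
    and D_unit: "coprime c p \<Longrightarrow> D k (of_nat c * x) \<Longrightarrow> D k x"
    and D_bound: "x \<noteq> 0 \<Longrightarrow> \<exists>k. \<not> D k x"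
begin

lemma D_sub: "D k x \<Longrightarrow> D k y \<Longrightarrow> D k (x - y)"
  using D_add D_neg by (metis diff_conv_add_uminus)

lemma D_sum: "(\<And>i. i \<in> I \<Longrightarrow> D k (f i)) \<Longrightarrow> D k (sum f I)"
proof (induction I rule: infinite_finite_induct)
  case (infinite A) then show ?case by (simp add: D_zero)
next
  case empty then show ?case by (simp add: D_zero)
next
  case (insert x F) then show ?case by (simp add: D_add)
qed

lemma D_ofnat: "D k x \<Longrightarrow> D k (of_nat c * x)"
proof (induction c)
  case 0 then show ?case by (simp add: D_zero)
next
  case (Suc c) then show ?case by (simp add: distrib_right D_add)
qed

lemma D_pow0: "D 0 x \<Longrightarrow> D 0 (x ^ m)"
proof (induction m)
  case 0 then show ?case by (simp add: D_one)
next
  case (Suc m) then show ?case using D_mult[of 0 x 0 "x^m"] by simp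
qed

lemma D_powk: "D k x \<Longrightarrow> D (k * m) (x ^ m)"
proof (induction m)
  case 0 then show ?case by (simp add: D_one)
next
  case (Suc m) then show ?case using D_mult[of k x "k*m" "x^m"] by simp
qed

lemma of_nat_comm: "of_nat c * (x::'a) = x * of_nat c"
  by (simp add: mult_of_nat_commute)

lemma cong_pow:
  assumes "D 0 g" "D 0 h" "D k (g - h)"
  shows "D k (g ^ m - h ^ m)"
proof (induction m)
  case 0 then show ?case by (simp add: D_zero)
next
  case (Suc m)
  have "g ^ Suc m - h ^ Suc m = g ^ m * (g - h) + (g ^ m - h ^ m) * h"
    by (simp add: algebra_simps power_Suc2 del: power_Suc)
  moreover have "D k (g ^ m * (g - h))" using D_mult[of 0 "g^m" k "g - h"] D_pow0 assms by simp
  moreover have "D k ((g ^ m - h ^ m) * h)" using D_mult[of k "g^m - h^m" 0 h] Suc assms by simp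
  ultimately show ?case by (simp add: D_add)
qed


lemma sum_split01:
  assumes "(q::nat) \<ge> 2"
  shows "(\<Sum>j\<le>q. f j) = f 0 + f 1 + (\<Sum>j\<in>{2..q}. (f j :: 'b::comm_monoid_add))"
proof -
  have "{..q} = insert 0 (insert 1 {2..q})" using assms by auto
  then show ?thesis by (simp add: add.assoc)
qed

lemma torsion_prime:
  assumes h0: "D 0 h" and h1: "D 1 (h - 1)" and q: "Factorial_Ring.prime q" and hq: "h ^ q = 1"
  shows "h = 1"
proof (rule ccontr)
  assume ne: "h \<noteq> 1"
  define x where "x = h - 1"
  have x0: "x \<noteq> 0" using ne by (simp add: x_def)
  obtain k0 where k0: "\<not> D k0 x" using D_bound[OF x0] by blast
  have sub: "{k. D k x} \<subseteq> {..<k0}"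
  proof
    fix k assume "k \<in> {k. D k x}"
    then have "D k x" by simp
    then show "k \<in> {..<k0}" using k0 D_mono[of k x k0] by (cases "k0 \<le> k") auto
  qed
  have fin: "finite {k. D k x}" using sub finite_subset by blast
  define k where "k = Max {k. D k x}"
  have Dx1: "D 1 x" using h1 by (simp add: x_def)
  have Dk: "D k x" using Max_in[OF fin] Dx1 unfolding k_def by blast
  have kmax: "\<And>l. D l x \<Longrightarrow> l \<le> k" using Max_ge[OF fin] unfolding k_def by blast
  have k1: "k \<ge> 1" using kmax[OF Dx1] .
  obtain A where xA: "x = of_nat (p ^ k) * A" and A0: "D 0 A" using D_div[OF Dk] by blast
  have nA: "\<not> D 1 A"
  proof
    assume "D 1 A"
    then have "D (1 + k) x" using D_pmul[of 1 A k] xA by simp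
    then show False using kmax[of "1 + k"] by simp
  qed
  have q2: "q \<ge> 2" using q by (simp add: prime_ge_2_nat)
  have hx: "h = 1 + x" by (simp add: x_def)
  define R where "R = (\<Sum>j\<in>{2..q}. of_nat (q choose j) * x ^ j)"
  have "h ^ q = 1 + of_nat q * x + R"
    unfolding hx binomial_ring1 R_def sum_split01[OF q2] by simp
  then have qxR: "of_nat q * x = - R" using hq by (simp add: algebra_simps eq_neg_iff_add_eq_0)
  have x0': "D 0 x" using D_mono[OF Dk] by simp
  show False
  proof (cases "q = p")
    case True
    have "D (k + 2) R" unfolding R_def
    proof (rule D_sum)
      fix j assume j: "j \<in> {2..q}"
      have Dxj: "D (k * j) (x ^ j)" using D_powk[OF Dk] .
      show "D (k + 2) (of_nat (q choose j) * x ^ j)"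
      proof (cases "j = q")
        case True
        have "k * 3 \<le> k * j" using True \<open>q = p\<close> p2 by simp
        then have "k * j \<ge> k + 2" using k1 by linarith
        then show ?thesis using True D_mono[OF Dxj] by simp
      next
        case False
        then have "q dvd (q choose j)" using dvd_choose_prime[of j q] j q by auto
        then obtain c where c: "q choose j = p * c" using \<open>q = p\<close> by blast
        have "D (k * j + 1) (of_nat (p ^ 1) * x ^ j)" using D_pmul[OF Dxj, of 1] .
        then have "D (k * j + 1) (of_nat c * (of_nat (p ^ 1) * x ^ j))" by (rule D_ofnat)
        moreover have "of_nat c * (of_nat (p ^ 1) * x ^ j) = of_nat (q choose j) * x ^ j"
          by (simp add: c mult.assoc mult.commute)
        moreover have "k * 2 \<le> k * j" using j by simp
        then have "k * j + 1 \<ge> k + 2" using k1 by linarith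
        ultimately show ?thesis using D_mono by metis
      qed
    qed
    then have "D (k + 2) (of_nat q * x)" using qxR D_neg by simp
    moreover have "of_nat q * x = of_nat (p ^ (k + 1)) * A" using \<open>q = p\<close> xA
      by (simp add: mult.assoc)
    ultimately have "D (1 + (k + 1)) (of_nat (p ^ (k + 1)) * A)" by (simp add: add.commute)
    then have "D 1 A" by (rule D_pcancel)
    then show False using nA by simp
  next
    case False
    have "D (2 * k) R" unfolding R_def
    proof (rule D_sum)
      fix j assume j: "j \<in> {2..q}"
      have Dxj: "D (k * j) (x ^ j)" using D_powk[OF Dk] .
      have "k * j \<ge> 2 * k" using j by (simp add: mult.commute)
      then show "D (2 * k) (of_nat (q choose j) * x ^ j)" using D_mono[OF Dxj] D_ofnat by blast
    qed
    then have "D (2 * k) (of_nat q * x)" using qxR D_neg by simp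
    moreover have "of_nat q * x = of_nat (p ^ k) * (of_nat q * A)" using xA
      by (metis mult.assoc of_nat_mult mult.commute)
    ultimately have "D (k + k) (of_nat (p ^ k) * (of_nat q * A))" by (simp add: mult_2)
    then have "D k (of_nat q * A)" by (rule D_pcancel)
    moreover have "coprime q p" using False q p_prime by (simp add: primes_coprime)
    ultimately have "D k A" using D_unit by blast
    then have "D 1 A" using D_mono k1 by blast
    then show False using nA by simp
  qed
qed

lemma torsion_free_cong:
  assumes "D 0 h" "D 1 (h - 1)" "h ^ m = 1" "m > 0"
  shows "h = 1"
  using assms
proof (induction m arbitrary: h rule: less_induct)
  case (less m)
  show ?case
  proof (cases "m = 1")
    case True then show ?thesis using less by simp
  next
    case False
    obtain q where q: "Factorial_Ring.prime q" "q dvd m" using prime_factor_nat[OF False] by blast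
    then obtain m' where m': "m = q * m'" by blast
    have m'0: "m' > 0" using less.prems m' by (cases m') auto
    have q2: "q \<ge> 2" using q by (simp add: prime_ge_2_nat)
    have lt: "m' < m" using m' m'0 q2 by simp
    have a: "D 0 (h ^ m')" using D_pow0 less.prems by simp
    have b: "D 1 (h ^ m' - 1)" using cong_pow[of h 1 1 m'] less.prems D_one by simp
    have c: "(h ^ m') ^ q = 1" using less.prems m' by (simp add: power_mult[symmetric] mult.commute)
    have "h ^ m' = 1" using torsion_prime[OF a b q(1) c] .
    then show ?thesis using less.IH[OF lt less.prems(1,2) _ m'0] by simp
  qed
qed

lemma frobenius:
  assumes "D 0 M"
  shows "D 1 ((1 + M) ^ p - (1 + M ^ p))"
proof -
  have p1: "p \<ge> 1" using p2 by simp
  have "{..p} = insert 0 (insert p {1..<p})" using p1 by auto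
  then have "(1 + M) ^ p = 1 + M ^ p + (\<Sum>j\<in>{1..<p}. of_nat (p choose j) * M ^ j)"
    unfolding binomial_ring1 using p2 by (simp add: add.assoc)
  moreover have "D 1 (\<Sum>j\<in>{1..<p}. of_nat (p choose j) * M ^ j)"
  proof (rule D_sum)
    fix j assume j: "j \<in> {1..<p}"
    then have "p dvd (p choose j)" using dvd_choose_prime[of j p] p_prime by auto
    then obtain c where c: "p choose j = p * c" by blast
    have "D (0 + 1) (of_nat (p ^ 1) * M ^ j)" using D_pmul[OF D_pow0[OF assms], of 1] by simp
    then have "D 1 (of_nat c * (of_nat (p ^ 1) * M ^ j))" using D_ofnat by simp
    moreover have "of_nat c * (of_nat (p ^ 1) * M ^ j) = of_nat (p choose j) * M ^ j"
      by (simp add: c mult.assoc mult.commute)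
    ultimately show "D 1 (of_nat (p choose j) * M ^ j)" by simp
  qed
  ultimately show ?thesis by simp
qed

lemma unip_pow:
  assumes "D 0 N"
  shows "D 1 ((1 + N) ^ (p ^ a) - (1 + N ^ (p ^ a)))"
proof (induction a)
  case 0 then show ?case by (simp add: D_zero)
next
  case (Suc a)
  define M where "M = (1 + N) ^ (p ^ a) - 1"
  have M0: "D 0 M" unfolding M_def using D_pow0[of "1 + N" "p ^ a"] D_add[OF D_one assms] D_one D_sub by blast
  have e: "(1 + N) ^ (p ^ Suc a) = (1 + M) ^ p"
    by (simp add: M_def power_mult[symmetric] mult.commute)
  have f: "D 1 ((1 + M) ^ p - (1 + M ^ p))" by (rule frobenius[OF M0])
  have g: "D 1 (M - N ^ (p ^ a))" using Suc by (simp add: M_def algebra_simps)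
  have "D 1 (M ^ p - (N ^ (p ^ a)) ^ p)"
    using cong_pow[OF M0 D_pow0[OF assms] g] .
  then have "D 1 (M ^ p - N ^ (p ^ Suc a))" by (simp add: power_mult[symmetric] mult.commute)
  then have "D 1 (((1 + M) ^ p - (1 + M ^ p)) + (M ^ p - N ^ (p ^ Suc a)))"
    using f D_add by blast
  then show ?case using e by (simp add: algebra_simps)
qed

lemma unip_torsion:
  assumes g0: "D 0 g" and c0: "D 0 c" and gc: "D 1 (g - c)" and nil: "(c - 1) ^ n = 0"
    and gm: "g ^ m = 1" and m0: "m > 0"
  shows "g ^ (p ^ n) = 1"
proof -
  have N0: "D 0 (c - 1)" using c0 D_one D_sub by blast
  have "n < 2 ^ n" by (rule less_exp)
  moreover have "(2::nat) ^ n \<le> p ^ n" using p2 by (simp add: power_mono)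
  ultimately have "n \<le> p ^ n" by linarith
  then have "(c - 1) ^ (p ^ n) = (c - 1) ^ n * (c - 1) ^ (p ^ n - n)"
    by (simp add: power_add[symmetric])
  then have z: "(c - 1) ^ (p ^ n) = 0" using nil by simp
  have "D 1 ((1 + (c - 1)) ^ (p ^ n) - (1 + (c - 1) ^ (p ^ n)))" using unip_pow[OF N0] .
  then have a: "D 1 (c ^ (p ^ n) - 1)" using z by simp
  have b: "D 1 (g ^ (p ^ n) - c ^ (p ^ n))" using cong_pow[OF g0 c0 gc] .
  have "D 1 (g ^ (p ^ n) - 1)" using D_add[OF b a] by simp
  moreover have "D 0 (g ^ (p ^ n))" using D_pow0[OF g0] .
  moreover have "(g ^ (p ^ n)) ^ m = 1" using gm by (metis power_mult mult.commute power_one)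
  ultimately show ?thesis using torsion_free_cong m0 by blast
qed


lemma cong_mult:
  assumes "D 0 a" "D 0 d" "D k (a - c)" "D k (b - d)"
  shows "D k (a * b - c * d)"
proof -
  have e: "a * b - c * d = a * (b - d) + (a - c) * d" by (simp add: algebra_simps)
  have "D (0 + k) (a * (b - d))" using D_mult[OF assms(1) assms(4)] .
  moreover have "D (k + 0) ((a - c) * d)" using D_mult[OF assms(3) assms(2)] .
  ultimately show ?thesis unfolding e using D_add[of k "a * (b - d)" "(a - c) * d"] by simp
qed

lemma cong_inv:
  assumes "D 0 ia" "D 0 ic" "ia * a = 1" "c * ic = 1" "D k (a - c)"
  shows "D k (ia - ic)"
proof -
  have e: "ia - ic = ia * (c - a) * ic"
  proof -
    have "ia * (c - a) * ic = ia * (c * ic) - (ia * a) * ic" by (simp add: algebra_simps)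
    also have "\<dots> = ia - ic" using assms(3,4) by simp
    finally show ?thesis by simp
  qed
  have "D k (c - a)" using D_neg[OF assms(5)] by simp
  from D_mult[OF D_mult[OF assms(1) this] assms(2)]
  show ?thesis unfolding e by simp
qed

end

lemma pow_coprime_one:
  fixes x :: "'a::monoid_mult"
  assumes "x ^ a = 1" "x ^ b = 1" "coprime a b" "a > 0"
  shows "x = 1"
proof -
  obtain u v where uv: "a * u = b * v + gcd a b" using bezout_nat[of a b] assms(4) by auto
  then have uv': "a * u = b * v + 1" using assms(3) by simp
  have "x ^ (a * u) = 1" using assms(1) by (simp add: power_mult)
  moreover have "x ^ (b * v + 1) = x" using assms(2) by (simp add: power_add power_mult)
  ultimately show ?thesis using uv' by simp
qed


definition Zp :: "nat \<Rightarrow> rat \<Rightarrow> bool" where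
  "Zp p r \<longleftrightarrow> (\<exists>a b. r = of_int a / of_int b \<and> \<not> int p dvd b)"

context
  fixes p :: nat
  assumes pp: "Factorial_Ring.prime p"
begin

lemma pp_int: "Factorial_Ring.prime (int p)" using pp by simp

lemma Zp_int: "Zp p (of_int a)"
  unfolding Zp_def
  by (rule exI[of _ a], rule exI[of _ 1]) (use pp_int in \<open>auto simp: prime_def\<close>)

lemma Zp_nat: "Zp p (of_nat a)"
  using Zp_int[of "int a"] by simp

lemma Zp_add: "Zp p r \<Longrightarrow> Zp p s \<Longrightarrow> Zp p (r + s)"
proof -
  assume "Zp p r" "Zp p s"
  then obtain a b c d where r: "r = of_int a / of_int b" "\<not> int p dvd b"
    and s: "s = of_int c / of_int d" "\<not> int p dvd d" unfolding Zp_def by blast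
  have b0: "b \<noteq> 0" "d \<noteq> 0" using r s by auto
  have "r + s = of_int (a * d + c * b) / of_int (b * d)"
    using r s b0 by (simp add: field_simps)
  moreover have "\<not> int p dvd b * d" using r s pp_int by (simp add: prime_dvd_mult_iff)
  ultimately show ?thesis unfolding Zp_def by blast
qed

lemma Zp_mult: "Zp p r \<Longrightarrow> Zp p s \<Longrightarrow> Zp p (r * s)"
proof -
  assume "Zp p r" "Zp p s"
  then obtain a b c d where r: "r = of_int a / of_int b" "\<not> int p dvd b"
    and s: "s = of_int c / of_int d" "\<not> int p dvd d" unfolding Zp_def by blast
  have "r * s = of_int (a * c) / of_int (b * d)"
    using r s by (simp add: field_simps)
  moreover have "\<not> int p dvd b * d" using r s pp_int by (simp add: prime_dvd_mult_iff)
  ultimately show ?thesis unfolding Zp_def by blast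
qed

lemma Zp_neg: "Zp p r \<Longrightarrow> Zp p (- r)"
  using Zp_mult[OF Zp_int[of "-1"]] by simp

lemma Zp_diff: "Zp p r \<Longrightarrow> Zp p s \<Longrightarrow> Zp p (r - s)"
  using Zp_add Zp_neg by (metis diff_conv_add_uminus)

lemma Zp_inv: "coprime c p \<Longrightarrow> Zp p (1 / of_nat c)"
proof -
  assume c: "coprime c p"
  have "\<not> int p dvd int c"
  proof
    assume "int p dvd int c"
    then have "p dvd c" by simp
    then have "p dvd gcd c p" by simp
    then show False using c pp by (simp add: prime_def)
  qed
  then show ?thesis unfolding Zp_def by (rule_tac x=1 in exI, rule_tac x="int c" in exI) simp
qed

lemma Zp_denom: "snd (quotient_of r) < int p \<Longrightarrow> Zp p r"
proof -
  assume a: "snd (quotient_of r) < int p"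
  obtain x y where q: "quotient_of r = (x, y)" by (cases "quotient_of r")
  have y: "y > 0" using quotient_of_denom_pos[OF q] .
  have "r = of_int x / of_int y" using quotient_of_div[OF q] .
  moreover have "\<not> int p dvd y" using a q y by (auto dest: zdvd_imp_le)
  ultimately show ?thesis unfolding Zp_def by blast
qed

lemma Zp_bound: "(\<And>k. Zp p (r / of_nat p ^ k)) \<Longrightarrow> r = 0"
proof (rule ccontr)
  assume all: "\<And>k. Zp p (r / of_nat p ^ k)" and r0: "r \<noteq> 0"
  obtain x y where q: "quotient_of r = (x, y)" by (cases "quotient_of r")
  have y: "y > 0" using quotient_of_denom_pos[OF q] .
  have r: "r = of_int x / of_int y" using quotient_of_div[OF q] .
  have x0: "x \<noteq> 0" using r r0 by auto
  define k where "k = nat \<bar>x\<bar>"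
  obtain a b where ab: "r / of_nat p ^ k = of_int a / of_int b" "\<not> int p dvd b"
    using all[of k] unfolding Zp_def by blast
  have b0: "b \<noteq> 0" using ab by auto
  have p0: "(of_nat p :: rat) \<noteq> 0" using pp by (auto simp: prime_def)
  have "of_int x / of_int y / (of_nat p ^ k) = (of_int a / of_int b :: rat)" using ab r by simp
  then have "of_int (x * b) = (of_int (a * y * int p ^ k) :: rat)"
    using b0 y p0 by (simp add: field_simps)
  then have eq: "x * b = a * y * int p ^ k" by (simp only: of_int_eq_iff)
  have "int p ^ k dvd x * b" using eq by simp
  moreover have "coprime (int p ^ k) b"
    using prime_imp_coprime[OF pp_int ab(2)] by simp
  ultimately have "int p ^ k dvd x" using coprime_dvd_mult_left_iff by blast
  then have "int p ^ k \<le> \<bar>x\<bar>" using x0 by (metis dvd_abs_iff zdvd_imp_le zero_less_abs_iff)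
  moreover have "\<bar>x\<bar> < 2 ^ k" unfolding k_def using less_exp[of "nat \<bar>x\<bar>"]
    by (metis abs_ge_zero int_nat_eq of_nat_less_iff of_nat_numeral of_nat_power)
  moreover have "(2::int) ^ k \<le> int p ^ k" using pp by (simp add: power_mono prime_ge_2_nat)
  ultimately show False by linarith
qed

lemma Zp_res: "Zp p r \<Longrightarrow> \<exists>z::int. 0 \<le> z \<and> z < int p \<and> Zp p ((r - of_int z) / of_nat p)"
proof -
  assume "Zp p r"
  then obtain a b where r: "r = of_int a / of_int b" "\<not> int p dvd b" unfolding Zp_def by blast
  have b0: "b \<noteq> 0" using r by auto
  have "coprime b (int p)" using prime_imp_coprime[OF pp_int r(2)] by (simp add: coprime_commute)
  then obtain u where u: "[b * u = 1] (mod int p)" using cong_solve_coprime_int by blast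
  define z where "z = (a * u) mod int p"
  have p0: "int p > 0" using pp by (simp add: prime_gt_0_nat)
  have "[b * z = a] (mod int p)"
  proof -
    have "[b * z = b * (a * u)] (mod int p)" unfolding z_def by (simp add: cong_def mod_mult_right_eq)
    moreover have "[b * (a * u) = a * 1] (mod int p)"
      using cong_mult[OF cong_refl[of a] u] by (simp add: mult.commute mult.left_commute)
    ultimately show ?thesis using cong_trans by simp
  qed
  then have "int p dvd a - b * z" by (metis cong_iff_dvd_diff cong_sym)
  then obtain t where t: "a - b * z = int p * t" by blast
  have "(r - of_int z) / of_nat p = of_int t / of_int b"
  proof -
    have "r - of_int z = (of_int a - of_int b * of_int z) / of_int b" using r b0 by (simp add: field_simps)
    also have "\<dots> = of_int (int p * t) / of_int b" using t by (metis of_int_diff of_int_mult)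
    finally show ?thesis using p0 b0 by (simp add: field_simps)
  qed
  moreover have "0 \<le> z" "z < int p" unfolding z_def using p0 by auto
  ultimately show ?thesis using r(2) unfolding Zp_def by blast
qed

end


definition lincomb :: "complex set \<Rightarrow> (complex \<Rightarrow> rat) \<Rightarrow> complex" where
  "lincomb B c = (\<Sum>b\<in>B. of_rat (c b) * b)"

definition Op :: "complex set \<Rightarrow> nat \<Rightarrow> complex \<Rightarrow> bool" where
  "Op B p x \<longleftrightarrow> (\<exists>c. (\<forall>b\<in>B. Zp p (c b)) \<and> x = lincomb B c)"

definition indep :: "complex set \<Rightarrow> bool" where
  "indep B \<longleftrightarrow> (\<forall>c. lincomb B c = 0 \<longrightarrow> (\<forall>b\<in>B. c b = 0))"

lemma rat_span_lincomb: "rat_span B = range (lincomb B)"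
  unfolding rat_span_def lincomb_def by auto

lemma lincomb_add: "lincomb B c + lincomb B d = lincomb B (\<lambda>b. c b + d b)"
  unfolding lincomb_def by (simp add: sum.distrib[symmetric] of_rat_add distrib_right)

lemma lincomb_scal: "of_rat r * lincomb B c = lincomb B (\<lambda>b. r * c b)"
  unfolding lincomb_def by (simp add: sum_distrib_left of_rat_mult mult.assoc)

lemma lincomb_zero: "lincomb B (\<lambda>b. 0) = 0"
  unfolding lincomb_def by simp

context
  fixes p :: nat
  assumes pp: "Factorial_Ring.prime p"
begin

lemma Op_zero: "Op B p 0"
  unfolding Op_def
  by (rule exI[of _ "\<lambda>b. 0"]) (use lincomb_zero Zp_int[OF pp, of 0] in simp)

lemma Op_add: "Op B p x \<Longrightarrow> Op B p y \<Longrightarrow> Op B p (x + y)"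
proof -
  assume "Op B p x" "Op B p y"
  then obtain c d where c: "\<forall>b\<in>B. Zp p (c b)" "x = lincomb B c"
    and d: "\<forall>b\<in>B. Zp p (d b)" "y = lincomb B d" unfolding Op_def by blast
  show ?thesis unfolding Op_def
    by (rule exI[of _ "\<lambda>b. c b + d b"]) (use c d lincomb_add Zp_add[OF pp] in auto)
qed

lemma Op_scal: "Zp p r \<Longrightarrow> Op B p x \<Longrightarrow> Op B p (of_rat r * x)"
proof -
  assume r: "Zp p r" and "Op B p x"
  then obtain c where c: "\<forall>b\<in>B. Zp p (c b)" "x = lincomb B c" unfolding Op_def by blast
  show ?thesis unfolding Op_def
    by (rule exI[of _ "\<lambda>b. r * c b"]) (use c r lincomb_scal Zp_mult[OF pp] in auto)
qed

lemma Op_neg: "Op B p x \<Longrightarrow> Op B p (- x)"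
  using Op_scal[OF Zp_int[OF pp, of "-1"]] by simp

lemma Op_diff: "Op B p x \<Longrightarrow> Op B p y \<Longrightarrow> Op B p (x - y)"
  using Op_add Op_neg by (metis diff_conv_add_uminus)

lemma Op_nat: "Op B p x \<Longrightarrow> Op B p (of_nat c * x)"
  using Op_scal[OF Zp_nat[OF pp, of c]] by simp

lemma Op_sum: "(\<And>i. i \<in> I \<Longrightarrow> Op B p (f i)) \<Longrightarrow> Op B p (sum f I)"
proof (induction I rule: infinite_finite_induct)
  case (infinite A) then show ?case by (simp add: Op_zero)
next
  case empty then show ?case by (simp add: Op_zero)
next
  case (insert x F) then show ?case by (simp add: Op_add)
qed

lemma Op_basis: "finite B \<Longrightarrow> b \<in> B \<Longrightarrow> Op B p b"
proof -
  assume B: "finite B" "b \<in> B"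
  have "lincomb B (\<lambda>x. if x = b then 1 else 0) = b"
  proof -
    have "(\<Sum>x\<in>B. of_rat (if x = b then 1 else 0) * x) = (\<Sum>x\<in>B. if x = b then b else 0)"
      by (rule sum.cong) auto
    also have "\<dots> = b" using B by simp
    finally show ?thesis unfolding lincomb_def .
  qed
  moreover have "\<forall>x\<in>B. Zp p (if x = b then 1 else 0)"
    using Zp_int[OF pp, of 1] Zp_int[OF pp, of 0] by simp
  ultimately show ?thesis unfolding Op_def by metis
qed

lemma Op_mult:
  assumes B: "finite B" and prod: "\<And>b1 b2. b1 \<in> B \<Longrightarrow> b2 \<in> B \<Longrightarrow> Op B p (b1 * b2)"
    and x: "Op B p x" and y: "Op B p y"
  shows "Op B p (x * y)"
proof -
  obtain c where c: "\<forall>b\<in>B. Zp p (c b)" "x = lincomb B c" using x unfolding Op_def by blast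
  obtain d where d: "\<forall>b\<in>B. Zp p (d b)" "y = lincomb B d" using y unfolding Op_def by blast
  have "x * y = (\<Sum>b1\<in>B. \<Sum>b2\<in>B. of_rat (c b1 * d b2) * (b1 * b2))"
    unfolding c d lincomb_def sum_product by (simp add: of_rat_mult algebra_simps)
  also have "Op B p \<dots>"
    by (intro Op_sum Op_scal) (use c d prod in \<open>auto intro: Zp_mult[OF pp]\<close>)
  finally show ?thesis .
qed

lemma Op_bound:
  assumes B: "finite B" "indep B" and x: "Op B p x" and x0: "x \<noteq> 0"
  shows "\<exists>k. \<not> Op B p (x / of_nat p ^ k)"
proof (rule ccontr)
  assume "\<not> ?thesis"
  then have all: "\<And>k. Op B p (x / of_nat p ^ k)" by blast
  obtain c where c: "\<forall>b\<in>B. Zp p (c b)" "x = lincomb B c" using x unfolding Op_def by blast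
  obtain b0 where b0: "b0 \<in> B" "c b0 \<noteq> 0"
  proof -
    have "\<not> (\<forall>b\<in>B. c b = 0)"
    proof
      assume "\<forall>b\<in>B. c b = 0"
      then have "x = 0" using c unfolding lincomb_def by simp
      then show False using x0 by simp
    qed
    then show ?thesis using that by blast
  qed
  have "Zp p (c b0 / of_nat p ^ k)" for k
  proof -
    obtain d where d: "\<forall>b\<in>B. Zp p (d b)" "x / of_nat p ^ k = lincomb B d"
      using all[of k] unfolding Op_def by blast
    have "x / of_nat p ^ k = of_rat (1 / of_nat p ^ k) * lincomb B c"
      using c by (simp add: of_rat_divide of_rat_power)
    also have "\<dots> = lincomb B (\<lambda>b. 1 / of_nat p ^ k * c b)" by (rule lincomb_scal)
    finally have L1: "x / of_nat p ^ k = lincomb B (\<lambda>b. 1 / of_nat p ^ k * c b)" .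
    have e1: "lincomb B (\<lambda>b. - d b) = - lincomb B d" using lincomb_scal[of "-1" B d] by simp
    have "lincomb B (\<lambda>b. 1 / of_nat p ^ k * c b) + lincomb B (\<lambda>b. - d b) = 0"
      using L1 d(2) e1 by simp
    then have "lincomb B (\<lambda>b. 1 / of_nat p ^ k * c b + - d b) = 0" by (simp add: lincomb_add)
    then have "1 / of_nat p ^ k * c b0 + - d b0 = 0" using B(2) b0 unfolding indep_def by blast
    then have "c b0 / of_nat p ^ k = d b0" by simp
    then show ?thesis using d b0 by simp
  qed
  then have "c b0 = 0" using Zp_bound[OF pp] by blast
  then show False using b0 by simp
qed

end

lemma good_primes:
  assumes B: "finite B" and Y: "finite Y" "Y \<subseteq> rat_span B"
  shows "\<exists>N. \<forall>p. Factorial_Ring.prime p \<longrightarrow> N < p \<longrightarrow> (\<forall>y\<in>Y. Op B p y)"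
  using Y
proof (induction Y rule: finite_induct)
  case empty then show ?case by simp
next
  case (insert y Y)
  obtain N where N: "\<forall>p. Factorial_Ring.prime p \<longrightarrow> N < p \<longrightarrow> (\<forall>y\<in>Y. Op B p y)"
    using insert by blast
  obtain c where c: "y = lincomb B c" using insert.prems unfolding rat_span_lincomb by auto
  define M where "M = (\<Sum>b\<in>B. nat (snd (quotient_of (c b))))"
  have "\<forall>p. Factorial_Ring.prime p \<longrightarrow> max N M < p \<longrightarrow> (\<forall>y\<in>insert y Y. Op B p y)"
  proof (intro allI impI)
    fix p :: nat assume pp: "Factorial_Ring.prime p" and lt: "max N M < p"
    have "\<forall>b\<in>B. Zp p (c b)"
    proof
      fix b assume b: "b \<in> B"
      have "nat (snd (quotient_of (c b))) \<le> M" unfolding M_def using B b by (intro member_le_sum) auto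
      then have "snd (quotient_of (c b)) < int p" using lt quotient_of_denom_pos'[of "c b"] by linarith
      then show "Zp p (c b)" using Zp_denom[OF pp] by blast
    qed
    then have "Op B p y" using c unfolding Op_def by blast
    then show "\<forall>y\<in>insert y Y. Op B p y" using N pp lt by auto
  qed
  then show ?case by blast
qed

lemma rat_span_mono: "finite B \<Longrightarrow> A \<subseteq> B \<Longrightarrow> rat_span A \<subseteq> rat_span B"
proof
  fix x assume B: "finite B" "A \<subseteq> B" and "x \<in> rat_span A"
  then obtain c where c: "x = lincomb A c" unfolding rat_span_lincomb by auto
  have "lincomb B (\<lambda>b. if b \<in> A then c b else 0) = x"
    unfolding c lincomb_def using B
    by (intro sum.mono_neutral_cong_right) auto
  then show "x \<in> rat_span B" unfolding rat_span_lincomb by (metis rangeI)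
qed

lemma exists_basis:
  assumes B: "finite B" "K = rat_span B"
  shows "\<exists>C. C \<subseteq> B \<and> finite C \<and> K = rat_span C \<and> indep C"
proof -
  define P where "P C \<longleftrightarrow> C \<subseteq> B \<and> K \<subseteq> rat_span C" for C
  have "P B" using B unfolding P_def by simp
  then obtain C where C: "P C" and Cmin: "\<forall>D. P D \<longrightarrow> card C \<le> card D"
    using ex_has_least_nat[of P B card] by blast
  have Cfin: "finite C" using C finite_subset[OF _ B(1)] unfolding P_def by blast
  have KC: "K = rat_span C" using C rat_span_mono[OF B(1)] B(2) unfolding P_def by blast
  have "indep C"
    unfolding indep_def
  proof (intro allI impI ballI, rule ccontr)
    fix c b0 assume c0: "lincomb C c = 0" and b0: "b0 \<in> C" and nz: "c b0 \<noteq> 0"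
    define C' where "C' = C - {b0}"
    have splitC: "lincomb C e = of_rat (e b0) * b0 + lincomb C' e" for e
      unfolding lincomb_def C'_def by (rule sum.remove[OF Cfin b0])
    have "of_rat (c b0) * b0 = - lincomb C' c"
      using c0 splitC[of c] by (simp add: eq_neg_iff_add_eq_0)
    then have b0eq: "b0 = - lincomb C' c / of_rat (c b0)"
    proof -
      have "b0 = (of_rat (c b0) * b0) / of_rat (c b0)" using nz by simp
      also have "\<dots> = - lincomb C' c / of_rat (c b0)"
        by (simp only: \<open>of_rat (c b0) * b0 = - lincomb C' c\<close>)
      finally show ?thesis .
    qed
    have "K \<subseteq> rat_span C'"
    proof
      fix x assume "x \<in> K"
      then obtain d where d: "x = lincomb C d" using KC unfolding rat_span_lincomb by auto
      have "x = of_rat (d b0) * b0 + lincomb C' d" using d splitC by simp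
      also have "\<dots> = lincomb C' d + of_rat (- d b0 / c b0) * lincomb C' c"
      proof -
        have "of_rat (d b0) * b0 = of_rat (d b0) * (- lincomb C' c / of_rat (c b0))"
          using b0eq by (rule arg_cong[where f="\<lambda>z. of_rat (d b0) * z"])
        also have "\<dots> = of_rat (- d b0 / c b0) * lincomb C' c"
          by (simp add: of_rat_divide of_rat_minus of_rat_mult of_rat_inverse divide_inverse mult_ac)
        finally have "of_rat (d b0) * b0 = of_rat (- d b0 / c b0) * lincomb C' c" .
        then show ?thesis by (simp add: add.commute)
      qed
      also have "\<dots> = lincomb C' (\<lambda>b. d b + (- d b0 / c b0) * c b)"
        by (simp add: lincomb_scal lincomb_add)
      finally show "x \<in> rat_span C'" unfolding rat_span_lincomb by (metis rangeI)
    qed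
    then have "P C'" using C unfolding P_def C'_def by auto
    moreover have "card C' < card C" unfolding C'_def using Cfin b0 by (metis card_Diff1_less)
    ultimately show False using Cmin by (meson not_le)
  qed
  then show ?thesis using C Cfin KC unfolding P_def by blast
qed


definition Dm :: "complex set \<Rightarrow> nat \<Rightarrow> nat \<Rightarrow> 'n::finite sqm \<Rightarrow> bool" where
  "Dm B p k Y \<longleftrightarrow> (\<forall>i j. Op B p (Rep_sqm Y $ i $ j / of_nat p ^ k))"

lemma Rep_sqm_mult_entry: "Rep_sqm (x * y) $ i $ j = (\<Sum>m\<in>UNIV. Rep_sqm x $ i $ m * Rep_sqm y $ m $ j)"
  by (simp add: Rep_sqm_simps matrix_matrix_mult_def)

lemma pval_Dm:
  assumes pp: "Factorial_Ring.prime p" and p2: "p > 2" and B: "finite B" "indep B"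
    and one: "Op B p 1" and prod: "\<And>b1 b2. b1 \<in> B \<Longrightarrow> b2 \<in> B \<Longrightarrow> Op B p (b1 * b2)"
  shows "pval (Dm B p :: nat \<Rightarrow> 'n::finite sqm \<Rightarrow> bool) p"
proof unfold_locales
  have p0: "(of_nat p :: complex) \<noteq> 0" using pp by (auto simp: prime_def)
  show "Factorial_Ring.prime p" by (rule pp)
  show "p > 2" by (rule p2)
  fix k l j :: nat and x y :: "'n sqm" and c :: nat
  show "Dm B p k 0" unfolding Dm_def by (simp add: Rep_sqm_simps Op_zero[OF pp])
  show "Dm B p k x \<Longrightarrow> Dm B p k y \<Longrightarrow> Dm B p k (x + y)"
    unfolding Dm_def by (simp add: Rep_sqm_simps add_divide_distrib Op_add[OF pp])
  show "Dm B p k x \<Longrightarrow> Dm B p k (- x)"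
    unfolding Dm_def by (simp add: Rep_sqm_simps Op_neg[OF pp])
  show "Dm B p 0 1"
    unfolding Dm_def by (simp add: Rep_sqm_simps mat_def one Op_zero[OF pp])
  show "Dm B p k x \<Longrightarrow> Dm B p l y \<Longrightarrow> Dm B p (k + l) (x * y)"
  proof -
    assume x: "Dm B p k x" and y: "Dm B p l y"
    show ?thesis unfolding Dm_def
    proof (intro allI)
      fix i j
      have "Rep_sqm (x * y) $ i $ j / of_nat p ^ (k + l) =
        (\<Sum>m\<in>UNIV. (Rep_sqm x $ i $ m / of_nat p ^ k) * (Rep_sqm y $ m $ j / of_nat p ^ l))"
        unfolding Rep_sqm_mult_entry by (simp add: sum_divide_distrib power_add)
      also have "Op B p \<dots>"
        using x y unfolding Dm_def by (intro Op_sum[OF pp] Op_mult[OF pp B(1) prod]) auto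
      finally show "Op B p (Rep_sqm (x * y) $ i $ j / of_nat p ^ (k + l))" .
    qed
  qed
  show "Dm B p k x \<Longrightarrow> l \<le> k \<Longrightarrow> Dm B p l x"
  proof -
    assume x: "Dm B p k x" and lk: "l \<le> k"
    show ?thesis unfolding Dm_def
    proof (intro allI)
      fix i j
      have "Rep_sqm x $ i $ j / of_nat p ^ l = of_rat (of_nat (p ^ (k - l))) * (Rep_sqm x $ i $ j / of_nat p ^ k)"
      proof -
        have pk: "(of_nat p::complex) ^ k = of_nat p ^ l * of_nat p ^ (k - l)"
          using lk by (simp add: power_add[symmetric])
        show ?thesis unfolding pk using p0 by (simp add: field_simps of_rat_power)
      qed
      also have "Op B p \<dots>" using x unfolding Dm_def by (intro Op_scal[OF pp] Zp_nat[OF pp]) auto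
      finally show "Op B p (Rep_sqm x $ i $ j / of_nat p ^ l)" .
    qed
  qed
  have pm: "Rep_sqm (of_nat (p ^ j) * x) $ a $ b / of_nat p ^ (k + j) = Rep_sqm x $ a $ b / of_nat p ^ k" for a b
    unfolding Rep_sqm_of_nat using p0 by (simp add: power_add)
  show "Dm B p k x \<Longrightarrow> Dm B p (k + j) (of_nat (p ^ j) * x)"
    unfolding Dm_def pm by simp
  show "Dm B p (k + j) (of_nat (p ^ j) * x) \<Longrightarrow> Dm B p k x"
    unfolding Dm_def pm by simp
  show "Dm B p k x \<Longrightarrow> \<exists>y. x = of_nat (p ^ k) * y \<and> Dm B p 0 y"
  proof -
    assume x: "Dm B p k x"
    define y where "y = Abs_sqm (\<chi> i j. Rep_sqm x $ i $ j / of_nat p ^ k)"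
    have "Rep_sqm (of_nat (p ^ k) * y) = Rep_sqm x"
      unfolding vec_eq_iff Rep_sqm_of_nat y_def using p0 by (simp add: Abs_sqm_inverse)
    then have "x = of_nat (p ^ k) * y" by (simp add: Rep_sqm_inject)
    moreover have "Dm B p 0 y" using x unfolding Dm_def y_def by (simp add: Abs_sqm_inverse)
    ultimately show ?thesis by blast
  qed
  show "coprime c p \<Longrightarrow> Dm B p k (of_nat c * x) \<Longrightarrow> Dm B p k x"
  proof -
    assume c: "coprime c p" and x: "Dm B p k (of_nat c * x)"
    have c0: "c \<noteq> 0"
    proof
      assume "c = 0"
      then have "p = 1" using c by simp
      then show False using pp by simp
    qed
    show ?thesis unfolding Dm_def
    proof (intro allI)
      fix i j
      have "Rep_sqm x $ i $ j / of_nat p ^ k = of_rat (1 / of_nat c) * (Rep_sqm (of_nat c * x) $ i $ j / of_nat p ^ k)"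
        unfolding Rep_sqm_of_nat using c0 by (simp add: of_rat_divide)
      also have "Op B p \<dots>" using x unfolding Dm_def by (intro Op_scal[OF pp] Zp_inv[OF pp c]) auto
      finally show "Op B p (Rep_sqm x $ i $ j / of_nat p ^ k)" .
    qed
  qed
  show "x \<noteq> 0 \<Longrightarrow> \<exists>k. \<not> Dm B p k x"
  proof -
    assume x0: "x \<noteq> 0"
    have "Rep_sqm x \<noteq> 0" using x0 by (metis Rep_sqm_inverse Abs_sqm_simps(4))
    then obtain i j where ij: "Rep_sqm x $ i $ j \<noteq> 0" by (metis vec_eq_iff zero_index)
    show ?thesis
    proof (cases "Op B p (Rep_sqm x $ i $ j)")
      case False
      then have "\<not> Dm B p 0 x" unfolding Dm_def by auto
      then show ?thesis by blast
    next
      case True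
      obtain k where "\<not> Op B p (Rep_sqm x $ i $ j / of_nat p ^ k)"
        using Op_bound[OF pp B True ij] by blast
      then have "\<not> Dm B p k x" unfolding Dm_def by auto
      then show ?thesis by blast
    qed
  qed
qed


lemma GLC_simps [simp]:
  "carrier GLC = {A. invertible A}" "mult GLC = (**)" "one GLC = mat 1"
  by (simp_all add: GLC_def)

lemma invertible_mat1: "invertible (mat 1 :: 'a::semiring_1^'n::finite^'n)"
  unfolding invertible_def by (rule exI[of _ "mat 1"]) simp

lemma group_GLC: "group (GLC :: (complex^'n::finite^'n) monoid)"
proof (rule groupI)
  fix x y z :: "complex^'n^'n"
  show "x \<in> carrier GLC \<Longrightarrow> y \<in> carrier GLC \<Longrightarrow> x \<otimes>\<^bsub>GLC\<^esub> y \<in> carrier GLC"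
    by (simp add: invertible_mult)
  show "\<one>\<^bsub>GLC\<^esub> \<in> carrier GLC" by (simp add: invertible_mat1)
  show "x \<otimes>\<^bsub>GLC\<^esub> y \<otimes>\<^bsub>GLC\<^esub> z = x \<otimes>\<^bsub>GLC\<^esub> (y \<otimes>\<^bsub>GLC\<^esub> z)"
    by (simp add: matrix_mul_assoc)
  show "\<one>\<^bsub>GLC\<^esub> \<otimes>\<^bsub>GLC\<^esub> x = x" by simp
  assume "x \<in> carrier GLC"
  then obtain x' where "x ** x' = mat 1" "x' ** x = mat 1" by (auto simp: invertible_def)
  then have "x' \<in> carrier GLC \<and> x' \<otimes>\<^bsub>GLC\<^esub> x = \<one>\<^bsub>GLC\<^esub>"
    by (auto simp: invertible_def)
  then show "\<exists>y\<in>carrier GLC. y \<otimes>\<^bsub>GLC\<^esub> x = \<one>\<^bsub>GLC\<^esub>" by blast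
qed

lemma Abs_pow: "Abs_sqm (g [^]\<^bsub>GLC\<^esub> (m::nat)) = Abs_sqm g ^ m"
  by (induction m) (simp_all add: Abs_sqm_simps power_Suc2 del: power_Suc)

lemma Abs_inj: "Abs_sqm A = Abs_sqm B \<Longrightarrow> A = B"
  by (simp add: Abs_sqm_inject)

lemma Abs_inv:
  assumes "g \<in> carrier GLC"
  shows "Abs_sqm (inv\<^bsub>GLC\<^esub> g) * Abs_sqm g = 1" "Abs_sqm g * Abs_sqm (inv\<^bsub>GLC\<^esub> g) = 1"
proof -
  have "inv\<^bsub>GLC\<^esub> g \<otimes>\<^bsub>GLC\<^esub> g = \<one>\<^bsub>GLC\<^esub>" "g \<otimes>\<^bsub>GLC\<^esub> inv\<^bsub>GLC\<^esub> g = \<one>\<^bsub>GLC\<^esub>"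
    using group.l_inv[OF group_GLC assms] group.r_inv[OF group_GLC assms] by auto
  then show "Abs_sqm (inv\<^bsub>GLC\<^esub> g) * Abs_sqm g = 1" "Abs_sqm g * Abs_sqm (inv\<^bsub>GLC\<^esub> g) = 1"
    by (simp_all add: Abs_sqm_simps[symmetric])
qed

lemma strict_upper_nilpotent:
  fixes N :: "'n::{finite,linorder} sqm"
  assumes z: "\<And>i j. j \<le> i \<Longrightarrow> Rep_sqm N $ i $ j = 0"
  shows "N ^ CARD('n) = 0"
proof -
  have claim: "\<And>i j. Rep_sqm (N ^ m) $ i $ j \<noteq> 0 \<Longrightarrow> m \<le> card {x. i < x \<and> x \<le> j}" for m
  proof (induction m)
    case 0 then show ?case by simp
  next
    case (Suc m)
    fix i j
    assume nz: "Rep_sqm (N ^ Suc m) $ i $ j \<noteq> 0"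
    have "Rep_sqm (N ^ Suc m) $ i $ j = (\<Sum>k\<in>UNIV. Rep_sqm N $ i $ k * Rep_sqm (N ^ m) $ k $ j)"
      by (simp add: Rep_sqm_mult_entry)
    then obtain k where k1: "Rep_sqm N $ i $ k \<noteq> 0" and k2: "Rep_sqm (N ^ m) $ k $ j \<noteq> 0"
      using nz by (metis (no_types, lifting) mult_eq_0_iff sum.neutral)
    have ik: "i < k" using z k1 by (meson not_le)
    have c: "m \<le> card {x. k < x \<and> x \<le> j}" using Suc.IH k2 by blast
    have kj: "k \<le> j"
    proof (cases m)
      case 0
      then have "Rep_sqm (1::'n sqm) $ k $ j \<noteq> 0" using k2 by simp
      then show ?thesis by (simp add: Rep_sqm_simps mat_def split: if_splits)
    next
      case (Suc m')
      then have "card {x. k < x \<and> x \<le> j} \<noteq> 0" using c by linarith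
      then have "{x. k < x \<and> x \<le> j} \<noteq> {}" by (metis card.empty)
      then obtain x where "k < x" "x \<le> j" by blast
      then show ?thesis by simp
    qed
    have "insert k {x. k < x \<and> x \<le> j} \<subseteq> {x. i < x \<and> x \<le> j}" using ik kj by auto
    then have "card (insert k {x. k < x \<and> x \<le> j}) \<le> card {x. i < x \<and> x \<le> j}"
      by (intro card_mono) auto
    moreover have "card (insert k {x. k < x \<and> x \<le> j}) = Suc (card {x. k < x \<and> x \<le> j})"
      by (intro card_insert_disjoint) auto
    ultimately show "Suc m \<le> card {x. i < x \<and> x \<le> j}" using c by simp
  qed
  have "Rep_sqm (N ^ CARD('n)) $ i $ j = 0" for i j
  proof (rule ccontr)
    assume "Rep_sqm (N ^ CARD('n)) $ i $ j \<noteq> 0"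
    then have "CARD('n) \<le> card {x. i < x \<and> x \<le> j}" by (rule claim)
    moreover have "card {x. i < x \<and> x \<le> j} \<le> card (UNIV - {i})" by (intro card_mono) auto
    moreover have "card (UNIV - {i :: 'n}) < CARD('n)" by (simp add: card_Diff_subset)
    ultimately show False by linarith
  qed
  then have "Rep_sqm (N ^ CARD('n)) = Rep_sqm 0" by (simp add: vec_eq_iff Rep_sqm_simps)
  then show ?thesis by (simp add: Rep_sqm_inject)
qed

lemma conj_pow:
  fixes Pa Pi Y :: "'a::ring_1"
  assumes "Pi * Pa = 1" and that: "Pa * Pi = 1"
  shows "(Pa * Y * Pi) ^ m = Pa * Y ^ m * Pi"
proof (induction m)
  case 0 then show ?case using that by simp
next
  case (Suc m)
  have "(Pa * Y * Pi) ^ Suc m = (Pa * Y * Pi) * (Pa * Y ^ m * Pi)" using Suc by simp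
  also have "\<dots> = Pa * Y * (Pi * Pa) * Y ^ m * Pi" by (simp add: mult.assoc)
  also have "\<dots> = Pa * Y ^ Suc m * Pi" using assms by (simp add: mult.assoc)
  finally show ?case .
qed

lemma unipotent_nil:
  fixes Gamma :: "((complex, 'n::{finite,linorder}) vec, 'n) vec set"
  assumes "unipotent_subgroup Gamma" "c \<in> Gamma"
  shows "(Abs_sqm c - 1) ^ CARD('n) = 0"
proof -
  obtain P :: "((complex, 'n) vec, 'n) vec" where P: "invertible P"
    and U: "\<forall>A\<in>Gamma. upper_unitriangular (matrix_inv P ** A ** P)"
    using assms(1) unfolding unipotent_subgroup_def by blast
  have PP: "P ** matrix_inv P = mat 1 \<and> matrix_inv P ** P = mat 1"
    unfolding matrix_inv_def by (rule someI_ex) (use P in \<open>simp add: invertible_def\<close>)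
  define Pa where "Pa = Abs_sqm P"
  define Pi where "Pi = Abs_sqm (matrix_inv P)"
  define Ua where "Ua = Abs_sqm (matrix_inv P ** c ** P)"
  have PaPi: "Pa * Pi = 1" "Pi * Pa = 1" using PP unfolding Pa_def Pi_def
    by (simp_all add: Abs_sqm_simps[symmetric])
  have Ua: "Ua = Pi * Abs_sqm c * Pa" unfolding Ua_def Pi_def Pa_def by (simp add: Abs_sqm_simps)
  have "Pa * (Ua - 1) * Pi = (Pa * Pi) * Abs_sqm c * (Pa * Pi) - Pa * Pi"
    unfolding Ua by (simp add: algebra_simps mult.assoc)
  then have cU: "Abs_sqm c - 1 = Pa * (Ua - 1) * Pi" using PaPi by simp
  have ut: "upper_unitriangular (matrix_inv P ** c ** P)" using U assms(2) by blast
  have "(Ua - 1) ^ CARD('n) = 0"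
  proof (rule strict_upper_nilpotent)
    fix i j :: 'n assume "j \<le> i"
    then show "Rep_sqm (Ua - 1) $ i $ j = 0"
      using ut unfolding upper_unitriangular_def Ua_def
      by (cases "j = i") (auto simp: Rep_sqm_simps Abs_sqm_inverse mat_def)
  qed
  then show ?thesis unfolding cU conj_pow[OF PaPi(2) PaPi(1)] by simp
qed


definition redc :: "complex set \<Rightarrow> nat \<Rightarrow> complex \<Rightarrow> (complex \<Rightarrow> int)" where
  "redc B r x = (SOME f. f \<in> PiE B (\<lambda>_. {0..<int r}) \<and>
     (\<exists>c. (\<forall>b\<in>B. Zp r (c b)) \<and> x = lincomb B c \<and> (\<forall>b\<in>B. Zp r ((c b - of_int (f b)) / of_nat r))))"

lemma redc_spec:
  assumes pp: "Factorial_Ring.prime r" and x: "Op B r x"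
  shows "redc B r x \<in> PiE B (\<lambda>_. {0..<int r}) \<and>
     (\<exists>c. (\<forall>b\<in>B. Zp r (c b)) \<and> x = lincomb B c \<and> (\<forall>b\<in>B. Zp r ((c b - of_int (redc B r x b)) / of_nat r)))"
proof -
  obtain c where c: "\<forall>b\<in>B. Zp r (c b)" "x = lincomb B c" using x unfolding Op_def by blast
  have "\<forall>b\<in>B. \<exists>z. 0 \<le> z \<and> z < int r \<and> Zp r ((c b - of_int z) / of_nat r)"
    using c Zp_res[OF pp] by blast
  then obtain g where g: "\<forall>b\<in>B. 0 \<le> g b \<and> g b < int r \<and> Zp r ((c b - of_int (g b)) / of_nat r)"
    using bchoice[of B "\<lambda>b z. 0 \<le> z \<and> z < int r \<and> Zp r ((c b - of_int z) / of_nat r)"] by blast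
  define f where "f = (\<lambda>b. if b \<in> B then g b else undefined)"
  define P where "P = (\<lambda>f. f \<in> PiE B (\<lambda>_. {0..<int r}) \<and>
     (\<exists>c. (\<forall>b\<in>B. Zp r (c b)) \<and> x = lincomb B c \<and> (\<forall>b\<in>B. Zp r ((c b - of_int (f b)) / of_nat r))))"
  have "P f"
    using g c unfolding f_def P_def by (auto simp: PiE_iff extensional_def)
  then have "P (SOME f. P f)" by (rule someI[of P f])
  moreover have "redc B r x = (SOME f. P f)" unfolding redc_def P_def by simp
  ultimately show ?thesis unfolding P_def by simp
qed

lemma redc_eq:
  assumes pp: "Factorial_Ring.prime r" and x: "Op B r x" and y: "Op B r y"
    and eq: "redc B r x = redc B r y"
  shows "Op B r ((x - y) / of_nat r)"
proof -
  define f where "f = redc B r x"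
  obtain c where c: "\<forall>b\<in>B. Zp r (c b)" "x = lincomb B c" "\<forall>b\<in>B. Zp r ((c b - of_int (f b)) / of_nat r)"
    using redc_spec[OF pp x] unfolding f_def by blast
  obtain d where d: "\<forall>b\<in>B. Zp r (d b)" "y = lincomb B d" "\<forall>b\<in>B. Zp r ((d b - of_int (f b)) / of_nat r)"
    using redc_spec[OF pp y] unfolding f_def eq by blast
  define e where "e b = (c b - of_int (f b)) / of_nat r - (d b - of_int (f b)) / of_nat r" for b
  have r0: "(of_nat r :: complex) \<noteq> 0" using pp by (auto simp: prime_def)
  have "lincomb B e = (\<Sum>b\<in>B. (of_rat (c b) * b - of_rat (d b) * b) / of_nat r)"
    unfolding lincomb_def
  proof (rule sum.cong)
    fix b
    have "of_rat (e b) = (of_rat (c b) - of_rat (d b)) / (of_nat r :: complex)"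
      unfolding e_def by (simp add: of_rat_diff of_rat_divide diff_divide_distrib)
    then show "of_rat (e b) * b = (of_rat (c b) * b - of_rat (d b) * b) / of_nat r"
      by (simp add: algebra_simps)
  qed simp
  also have "\<dots> = (x - y) / of_nat r"
    unfolding c(2) d(2) lincomb_def by (simp add: sum_divide_distrib[symmetric] sum_subtractf)
  finally have "(x - y) / of_nat r = lincomb B e" by simp
  moreover have "\<forall>b\<in>B. Zp r (e b)" using c d unfolding e_def by (simp add: Zp_diff[OF pp])
  ultimately show ?thesis unfolding Op_def by blast
qed

lemma key_finite:
  assumes "finite B"
  shows "finite {F :: 'n::finite \<Rightarrow> 'n \<Rightarrow> complex \<Rightarrow> int. \<forall>i j. F i j \<in> PiE B (\<lambda>_. {0..<int r})}"
proof -
  have "{F :: 'n \<Rightarrow> 'n \<Rightarrow> complex \<Rightarrow> int. \<forall>i j. F i j \<in> PiE B (\<lambda>_. {0..<int r})}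
        \<subseteq> PiE UNIV (\<lambda>i. PiE UNIV (\<lambda>j. PiE B (\<lambda>_. {0..<int r})))"
  proof
    fix F :: "'n \<Rightarrow> 'n \<Rightarrow> complex \<Rightarrow> int"
    assume "F \<in> {F. \<forall>i j. F i j \<in> PiE B (\<lambda>_. {0..<int r})}"
    then have "\<forall>i j. F i j \<in> PiE B (\<lambda>_. {0..<int r})" by simp
    then show "F \<in> PiE UNIV (\<lambda>i. PiE UNIV (\<lambda>j. PiE B (\<lambda>_. {0..<int r})))"
      unfolding PiE_UNIV_domain by (simp add: Pi_def)
  qed
  moreover have "finite (PiE UNIV (\<lambda>i::'n. PiE UNIV (\<lambda>j::'n. PiE B (\<lambda>_. {0..<int r}))))"
    using assms by (intro finite_PiE finite_UNIV) auto
  ultimately show ?thesis by (rule finite_subset)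
qed

context
  fixes B :: "complex set" and r :: nat
    and Lambda Gamma :: "((complex, 'n::{finite,linorder}) vec, 'n) vec set"
  assumes pv: "pval (Dm B r :: nat \<Rightarrow> 'n sqm \<Rightarrow> bool) r"
    and LG: "subgroup Lambda GLC" and GG: "unipotent_subgroup Gamma" and sub: "Gamma \<subseteq> Lambda"
    and L0: "\<forall>g\<in>Lambda. Dm B r 0 (Abs_sqm g)"
begin

lemma GGs: "subgroup Gamma GLC" using GG unfolding unipotent_subgroup_def by blast

lemma pc_inv:
  assumes a: "a \<in> Lambda" and c: "c \<in> Gamma" and ac: "Dm B r 1 (Abs_sqm a - Abs_sqm c)"
  shows "inv\<^bsub>GLC\<^esub> c \<in> Gamma \<and> Dm B r 1 (Abs_sqm (inv\<^bsub>GLC\<^esub> a) - Abs_sqm (inv\<^bsub>GLC\<^esub> c))"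
proof -
  have ac': "a \<in> carrier GLC" "c \<in> carrier GLC"
    using a c sub subgroup.mem_carrier[OF LG] by auto
  have ia: "inv\<^bsub>GLC\<^esub> a \<in> Lambda" using subgroup.m_inv_closed[OF LG a] .
  have ic: "inv\<^bsub>GLC\<^esub> c \<in> Gamma" using subgroup.m_inv_closed[OF GGs c] .
  have "Dm B r 1 (Abs_sqm (inv\<^bsub>GLC\<^esub> a) - Abs_sqm (inv\<^bsub>GLC\<^esub> c))"
    using pval.cong_inv[OF pv, where ia="Abs_sqm (inv\<^bsub>GLC\<^esub> a)" and ic="Abs_sqm (inv\<^bsub>GLC\<^esub> c)" and a="Abs_sqm a" and c="Abs_sqm c" and k=1]
      L0 ia ic sub Abs_inv[OF ac'(1)] Abs_inv[OF ac'(2)] ac by blast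
  then show ?thesis using ic by blast
qed

lemma pc_mult:
  assumes a: "a \<in> Lambda" and b: "b \<in> Lambda" and c: "c \<in> Gamma" and d: "d \<in> Gamma"
    and ac: "Dm B r 1 (Abs_sqm a - Abs_sqm c)" and bd: "Dm B r 1 (Abs_sqm b - Abs_sqm d)"
  shows "Dm B r 1 (Abs_sqm (a ** b) - Abs_sqm (c ** d))"
  using pval.cong_mult[OF pv, where a="Abs_sqm a" and d="Abs_sqm d" and k=1 and c="Abs_sqm c" and b="Abs_sqm b"] L0 a d sub ac bd
  by (auto simp: Abs_sqm_simps)

lemma pc_tors:
  assumes g: "g \<in> Lambda" and c: "c \<in> Gamma" and gc: "Dm B r 1 (Abs_sqm g - Abs_sqm c)"
    and gm: "g [^]\<^bsub>GLC\<^esub> (m::nat) = mat 1" and m0: "m > 0"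
  shows "Abs_sqm g ^ (r ^ CARD('n)) = 1"
proof -
  have "Abs_sqm g ^ m = 1" using gm Abs_pow[of g m] by (simp add: Abs_sqm_simps)
  moreover have "(Abs_sqm c - 1) ^ CARD('n) = 0" using unipotent_nil[OF GG c] .
  moreover have "Dm B r 0 (Abs_sqm g)" "Dm B r 0 (Abs_sqm c)" using L0 g c sub by auto
  ultimately show ?thesis using pval.unip_torsion[OF pv] gc m0 by blast
qed

lemma pc_key:
  assumes a: "a \<in> Lambda" and b: "b \<in> Lambda"
    and k: "(\<lambda>i j. redc B r (a $ i $ j)) = (\<lambda>i j. redc B r (b $ i $ j))"
  shows "Dm B r 1 (Abs_sqm a - Abs_sqm b)"
  unfolding Dm_def
proof (intro allI)
  fix i j
  have pp: "Factorial_Ring.prime r" using pval.p_prime[OF pv] .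
  have "Op B r (a $ i $ j)" "Op B r (b $ i $ j)"
    using L0 a b unfolding Dm_def by (auto simp: Abs_sqm_inverse)
  moreover have "redc B r (a $ i $ j) = redc B r (b $ i $ j)" using k by meson
  ultimately have "Op B r ((a $ i $ j - b $ i $ j) / of_nat r)" using redc_eq[OF pp] by blast
  then show "Op B r (Rep_sqm (Abs_sqm a - Abs_sqm b) $ i $ j / of_nat r ^ 1)"
    by (simp add: Abs_sqm_simps(3)[symmetric] Abs_sqm_inverse)
qed

lemma pc_one:
  assumes a: "a \<in> Lambda" and b: "b \<in> Lambda" and ab: "Dm B r 1 (Abs_sqm a - Abs_sqm b)"
  shows "Dm B r 1 (Abs_sqm (a ** inv\<^bsub>GLC\<^esub> b) - Abs_sqm (mat 1))"
proof -
  have bc: "b \<in> carrier GLC" using b subgroup.mem_carrier[OF LG] by auto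
  have ib: "Dm B r 0 (Abs_sqm (inv\<^bsub>GLC\<^esub> b))" using L0 subgroup.m_inv_closed[OF LG b] by blast
  have e: "Abs_sqm (a ** inv\<^bsub>GLC\<^esub> b) - Abs_sqm (mat 1) = (Abs_sqm a - Abs_sqm b) * Abs_sqm (inv\<^bsub>GLC\<^esub> b)"
    using Abs_inv(2)[OF bc] by (simp add: Abs_sqm_simps algebra_simps)
  show ?thesis unfolding e using pval.D_mult[OF pv ab ib] by simp
qed

end


theorem mainTheorem18:
  fixes K :: "complex set"
    and Lambda Gamma :: "((complex, 'n::{finite,linorder}) vec, 'n) vec set"
  assumes "number_field K"
    and "subgroup Lambda GLC"
    and "\<forall>A\<in>Lambda. entries_in K A"
    and "\<exists>S. finite S \<and> S \<subseteq> carrier GLC \<and> Lambda = generate GLC S"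
    and "unipotent_subgroup Gamma"
    and "Gamma \<subseteq> Lambda"
  shows "\<exists>Lambda0. subgroup Lambda0 GLC \<and> Lambda0 \<subseteq> Lambda \<and>
           finite (rcosets\<^bsub>GLC\<lparr>carrier := Lambda\<rparr>\<^esub> Lambda0) \<and>
           torsion_free Lambda0 \<and> Gamma \<subseteq> Lambda0"
proof -
  note grp = group_GLC[where 'n='n]
  note LG = assms(2)
  have GG: "subgroup Gamma GLC" using assms(5) unfolding unipotent_subgroup_def by blast
  obtain B0 where B0: "finite B0" "B0 \<subseteq> K" "K = rat_span B0"
    using assms(1) unfolding number_field_def by blast
  obtain B where B: "B \<subseteq> B0" "finite B" "K = rat_span B" "indep B"
    using exists_basis[OF B0(1) B0(3)] by blast
  have BK: "B \<subseteq> K" using B B0 by blast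
  have Kc: "\<And>x y. x \<in> K \<Longrightarrow> y \<in> K \<Longrightarrow> x * y \<in> K" "1 \<in> K"
    using assms(1) unfolding number_field_def by blast+
  obtain S where S: "finite S" "S \<subseteq> carrier GLC" "Lambda = generate GLC S" using assms(4) by blast
  define T where "T = S \<union> (\<lambda>A. inv\<^bsub>GLC\<^esub> A) ` S"
  have TL: "T \<subseteq> Lambda"
    unfolding T_def S(3) using generate.incl[of _ S GLC] generate.inv[of _ S GLC] by blast
  define E where "E = (\<lambda>(A, i, j). A $ i $ j) ` (T \<times> UNIV \<times> UNIV)"
  have Efin: "finite E" unfolding E_def T_def using S(1) by simp
  have EK: "E \<subseteq> K"
  proof
    fix x assume "x \<in> E"
    then obtain A i j where "A \<in> T" "x = A $ i $ j" unfolding E_def by auto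
    then show "x \<in> K" using TL assms(3) unfolding entries_in_def by blast
  qed
  define Y where "Y = insert 1 ((\<lambda>(b1, b2). b1 * b2) ` (B \<times> B) \<union> E)"
  have Yfin: "finite Y" unfolding Y_def using B(2) Efin by simp
  have YK0: "Y \<subseteq> K" unfolding Y_def using BK EK Kc by (auto intro!: Kc(1))
  have YK: "Y \<subseteq> rat_span B" using YK0 B(3) by simp
  obtain N where N: "\<forall>p. Factorial_Ring.prime p \<longrightarrow> N < p \<longrightarrow> (\<forall>y\<in>Y. Op B p y)"
    using good_primes[OF B(2) Yfin YK] by blast
  obtain p :: nat where p: "Factorial_Ring.prime p" "max N 2 < p" using bigger_prime by blast
  obtain q :: nat where q: "Factorial_Ring.prime q" "p < q" using bigger_prime by blast
  have rprops: "Factorial_Ring.prime r \<and> r > 2 \<and> (\<forall>y\<in>Y. Op B r y)" if "r \<in> {p, q}" for r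
    using that N p q by auto
  have pv: "pval (Dm B r :: nat \<Rightarrow> 'n sqm \<Rightarrow> bool) r" if r: "r \<in> {p, q}" for r
  proof (rule pval_Dm)
    show "Factorial_Ring.prime r" "r > 2" using rprops[OF r] by auto
    show "finite B" "indep B" using B by auto
    show "Op B r 1" using rprops[OF r] unfolding Y_def by auto
    fix b1 b2 assume "b1 \<in> B" "b2 \<in> B"
    then show "Op B r (b1 * b2)" using rprops[OF r] unfolding Y_def by auto
  qed
  have OpT: "Op B r (A $ i $ j)" if r: "r \<in> {p, q}" and A: "A \<in> T" for r A i j
  proof -
    have "A $ i $ j \<in> E" unfolding E_def using A by (intro image_eqI[where x="(A, i, j)"]) auto
    then show ?thesis using rprops[OF r] unfolding Y_def by auto
  qed
  have L0: "\<forall>g\<in>Lambda. Dm B r 0 (Abs_sqm g)" if r: "r \<in> {p, q}" for r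
  proof
    fix g assume "g \<in> Lambda"
    then have "g \<in> generate GLC S" using S(3) by simp
    then show "Dm B r 0 (Abs_sqm g)"
    proof (induction rule: generate.induct)
      case one
      then show ?case using pval.D_one[OF pv[OF r]] by (simp add: Abs_sqm_simps)
    next
      case (incl h)
      then have "h \<in> T" unfolding T_def by blast
      then show ?case unfolding Dm_def using OpT[OF r] by (simp add: Abs_sqm_inverse)
    next
      case (inv h)
      then have "inv\<^bsub>GLC\<^esub> h \<in> T" unfolding T_def by blast
      then show ?case unfolding Dm_def using OpT[OF r] by (simp add: Abs_sqm_inverse)
    next
      case (eng h1 h2)
      then show ?case using pval.D_mult[OF pv[OF r], of 0 "Abs_sqm h1" 0 "Abs_sqm h2"]
        by (simp add: Abs_sqm_simps)
    qed
  qed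
  have rp: "p \<in> {p, q}" and rq: "q \<in> {p, q}" by auto
  note pvp = pv[OF rp] and pvq = pv[OF rq] and L0p = L0[OF rp] and L0q = L0[OF rq]
  define Lambda0 where "Lambda0 = {g \<in> Lambda. (\<exists>c\<in>Gamma. Dm B p 1 (Abs_sqm g - Abs_sqm c)) \<and>
                                              (\<exists>c\<in>Gamma. Dm B q 1 (Abs_sqm g - Abs_sqm c))}"
  have one_L: "mat 1 \<in> Lambda" using subgroup.one_closed[OF LG] by simp
  have one_G: "mat 1 \<in> Gamma" using subgroup.one_closed[OF GG] by simp
  have GamL0: "Gamma \<subseteq> Lambda0"
  proof
    fix c assume c: "c \<in> Gamma"
    have "Dm B r 1 (Abs_sqm c - Abs_sqm c)" if "r \<in> {p, q}" for r
      using pval.D_zero[OF pv[OF that]] by simp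
    then show "c \<in> Lambda0" unfolding Lambda0_def using c assms(6) by blast
  qed
  have sg: "subgroup Lambda0 GLC"
  proof (rule group.subgroupI[OF grp])
    show "Lambda0 \<subseteq> carrier GLC" using subgroup.subset[OF LG] unfolding Lambda0_def by blast
    show "Lambda0 \<noteq> {}" using GamL0 one_G by blast
  next
    fix a assume a: "a \<in> Lambda0"
    then obtain c c' where aL: "a \<in> Lambda" and c: "c \<in> Gamma" "Dm B p 1 (Abs_sqm a - Abs_sqm c)"
      and c': "c' \<in> Gamma" "Dm B q 1 (Abs_sqm a - Abs_sqm c')" unfolding Lambda0_def by blast
    have "inv\<^bsub>GLC\<^esub> a \<in> Lambda" using subgroup.m_inv_closed[OF LG aL] .
    moreover have "\<exists>d\<in>Gamma. Dm B p 1 (Abs_sqm (inv\<^bsub>GLC\<^esub> a) - Abs_sqm d)"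
      using pc_inv[OF pvp LG assms(5) assms(6) L0p aL c(1) c(2)] by blast
    moreover have "\<exists>d\<in>Gamma. Dm B q 1 (Abs_sqm (inv\<^bsub>GLC\<^esub> a) - Abs_sqm d)"
      using pc_inv[OF pvq LG assms(5) assms(6) L0q aL c'(1) c'(2)] by blast
    ultimately show "inv\<^bsub>GLC\<^esub> a \<in> Lambda0" unfolding Lambda0_def by blast
  next
    fix a b assume a: "a \<in> Lambda0" and b: "b \<in> Lambda0"
    from a obtain c c' where aL: "a \<in> Lambda" and c: "c \<in> Gamma" "Dm B p 1 (Abs_sqm a - Abs_sqm c)"
      and c': "c' \<in> Gamma" "Dm B q 1 (Abs_sqm a - Abs_sqm c')" unfolding Lambda0_def by blast
    from b obtain d d' where bL: "b \<in> Lambda" and d: "d \<in> Gamma" "Dm B p 1 (Abs_sqm b - Abs_sqm d)"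
      and d': "d' \<in> Gamma" "Dm B q 1 (Abs_sqm b - Abs_sqm d')" unfolding Lambda0_def by blast
    have "a ** b \<in> Lambda" using subgroup.m_closed[OF LG aL bL] by simp
    moreover have "c ** d \<in> Gamma" "c' ** d' \<in> Gamma"
      using subgroup.m_closed[OF GG c(1) d(1)] subgroup.m_closed[OF GG c'(1) d'(1)] by simp_all
    moreover have "Dm B p 1 (Abs_sqm (a ** b) - Abs_sqm (c ** d))"
      using pc_mult[OF pvp LG assms(5) assms(6) L0p aL bL c(1) d(1) c(2) d(2)] .
    moreover have "Dm B q 1 (Abs_sqm (a ** b) - Abs_sqm (c' ** d'))"
      using pc_mult[OF pvq LG assms(5) assms(6) L0q aL bL c'(1) d'(1) c'(2) d'(2)] .
    ultimately show "a \<otimes>\<^bsub>GLC\<^esub> b \<in> Lambda0" unfolding Lambda0_def by auto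
  qed
  have sub0: "Lambda0 \<subseteq> Lambda" unfolding Lambda0_def by blast
  have tf: "torsion_free Lambda0"
    unfolding torsion_free_def
  proof (intro ballI allI impI)
    fix g and m :: nat
    assume g: "g \<in> Lambda0" and m0: "m > 0" and gm: "g [^]\<^bsub>GLC\<^esub> m = \<one>\<^bsub>GLC\<^esub>"
    from g obtain c c' where gL: "g \<in> Lambda" and c: "c \<in> Gamma" "Dm B p 1 (Abs_sqm g - Abs_sqm c)"
      and c': "c' \<in> Gamma" "Dm B q 1 (Abs_sqm g - Abs_sqm c')" unfolding Lambda0_def by blast
    have gm': "g [^]\<^bsub>GLC\<^esub> m = mat 1" using gm by simp
    have e1: "Abs_sqm g ^ (p ^ CARD('n)) = 1"
      using pc_tors[OF pvp LG assms(5) assms(6) L0p gL c(1) c(2) gm' m0] .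
    have e2: "Abs_sqm g ^ (q ^ CARD('n)) = 1"
      using pc_tors[OF pvq LG assms(5) assms(6) L0q gL c'(1) c'(2) gm' m0] .
    have "coprime p q" using p(1) q(1) q(2) by (simp add: primes_coprime)
    then have cop: "coprime (p ^ CARD('n)) (q ^ CARD('n))" by simp
    have "p ^ CARD('n) > 0" using p by simp
    then have "Abs_sqm g = 1" using pow_coprime_one[OF e1 e2 cop] by simp
    then have "Abs_sqm g = Abs_sqm (mat 1)" by (simp add: Abs_sqm_simps)
    then show "g = \<one>\<^bsub>GLC\<^esub>" using Abs_inj by simp
  qed
  define key where "key (a :: ((complex, 'n) vec, 'n) vec) = ((\<lambda>i j. redc B p (a $ i $ j)), (\<lambda>i j. redc B q (a $ i $ j)))" for a
  have cos_sub: "Lambda0 #>\<^bsub>GLC\<lparr>carrier := Lambda\<rparr>\<^esub> a \<subseteq> Lambda0 #>\<^bsub>GLC\<lparr>carrier := Lambda\<rparr>\<^esub> b"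
    if a: "a \<in> Lambda" and b: "b \<in> Lambda" and k: "key a = key b" for a b
  proof -
    have kp: "(\<lambda>i j. redc B p (a $ i $ j)) = (\<lambda>i j. redc B p (b $ i $ j))"
      and kq: "(\<lambda>i j. redc B q (a $ i $ j)) = (\<lambda>i j. redc B q (b $ i $ j))"
      using k unfolding key_def by simp_all
    define t where "t = a ** inv\<^bsub>GLC\<^esub> b"
    have tL: "t \<in> Lambda" unfolding t_def
      using subgroup.m_closed[OF LG a subgroup.m_inv_closed[OF LG b]] by simp
    have "Dm B p 1 (Abs_sqm t - Abs_sqm (mat 1))" unfolding t_def
      using pc_one[OF pvp LG assms(5) assms(6) L0p a b pc_key[OF pvp LG assms(5) assms(6) L0p a b kp]] .
    moreover have "Dm B q 1 (Abs_sqm t - Abs_sqm (mat 1))" unfolding t_def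
      using pc_one[OF pvq LG assms(5) assms(6) L0q a b pc_key[OF pvq LG assms(5) assms(6) L0q a b kq]] .
    ultimately have tL0: "t \<in> Lambda0" unfolding Lambda0_def using tL one_G by blast
    have bc: "b \<in> carrier GLC" using b subgroup.subset[OF LG] by blast
    have "inv\<^bsub>GLC\<^esub> b \<otimes>\<^bsub>GLC\<^esub> b = \<one>\<^bsub>GLC\<^esub>" using group.l_inv[OF grp bc] .
    then have tb: "t ** b = a" unfolding t_def by (simp add: matrix_mul_assoc[symmetric])
    show ?thesis
    proof
      fix x assume "x \<in> Lambda0 #>\<^bsub>GLC\<lparr>carrier := Lambda\<rparr>\<^esub> a"
      then obtain h where h: "h \<in> Lambda0" "x = h ** a" unfolding r_coset_def by auto
      have "h ** t \<in> Lambda0" using subgroup.m_closed[OF sg h(1) tL0] by simp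
      moreover have "x = (h ** t) ** b" using h(2) tb by (simp add: matrix_mul_assoc[symmetric])
      ultimately show "x \<in> Lambda0 #>\<^bsub>GLC\<lparr>carrier := Lambda\<rparr>\<^esub> b" unfolding r_coset_def by auto
    qed
  qed
  have KF: "finite {F :: 'n \<Rightarrow> 'n \<Rightarrow> complex \<Rightarrow> int. \<forall>i j. F i j \<in> PiE B (\<lambda>_. {0..<int r})}" for r
    using key_finite[OF B(2)] .
  have keyrange: "key ` Lambda \<subseteq> {F. \<forall>i j. F i j \<in> PiE B (\<lambda>_. {0..<int p})} \<times> {F. \<forall>i j. F i j \<in> PiE B (\<lambda>_. {0..<int q})}"
  proof
    fix k assume "k \<in> key ` Lambda"
    then obtain a where a: "a \<in> Lambda" "k = key a" by blast
    have opa: "Op B r (a $ i $ j)" if "r \<in> {p, q}" for r i j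
      using L0[OF that] a(1) unfolding Dm_def by (auto simp: Abs_sqm_inverse)
    have "redc B r (a $ i $ j) \<in> PiE B (\<lambda>_. {0..<int r})" if "r \<in> {p, q}" for r i j
    proof -
      have "Factorial_Ring.prime r" using rprops[OF that] by blast
      from redc_spec[OF this opa[OF that]] show ?thesis by blast
    qed
    then show "k \<in> {F. \<forall>i j. F i j \<in> PiE B (\<lambda>_. {0..<int p})} \<times> {F. \<forall>i j. F i j \<in> PiE B (\<lambda>_. {0..<int q})}"
      unfolding a(2) key_def by auto
  qed
  have kfin: "finite (key ` Lambda)"
    using finite_subset[OF keyrange finite_cartesian_product[OF KF KF]] .
  have "rcosets\<^bsub>GLC\<lparr>carrier := Lambda\<rparr>\<^esub> Lambda0 \<subseteq>
      (\<lambda>k. Lambda0 #>\<^bsub>GLC\<lparr>carrier := Lambda\<rparr>\<^esub> (SOME a. a \<in> Lambda \<and> key a = k)) ` (key ` Lambda)"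
  proof
    fix Z assume "Z \<in> rcosets\<^bsub>GLC\<lparr>carrier := Lambda\<rparr>\<^esub> Lambda0"
    then obtain a where a: "a \<in> Lambda" "Z = Lambda0 #>\<^bsub>GLC\<lparr>carrier := Lambda\<rparr>\<^esub> a"
      unfolding RCOSETS_def by auto
    define a' where "a' = (SOME a'. a' \<in> Lambda \<and> key a' = key a)"
    have a': "a' \<in> Lambda \<and> key a' = key a" unfolding a'_def by (rule someI[of _ a]) (use a in simp)
    have "Z = Lambda0 #>\<^bsub>GLC\<lparr>carrier := Lambda\<rparr>\<^esub> a'"
      using cos_sub[of a a'] cos_sub[of a' a] a a' by auto
    then show "Z \<in> (\<lambda>k. Lambda0 #>\<^bsub>GLC\<lparr>carrier := Lambda\<rparr>\<^esub> (SOME a. a \<in> Lambda \<and> key a = k)) ` (key ` Lambda)"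
      using a unfolding a'_def by blast
  qed
  then have fin: "finite (rcosets\<^bsub>GLC\<lparr>carrier := Lambda\<rparr>\<^esub> Lambda0)"
    by (rule finite_subset[OF _ finite_imageI[OF kfin]])
  show ?thesis using sg sub0 fin tf GamL0 by blast
qed

end
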